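(* Let $d$ be a positive integer and let $A\in\mathbb{R}^{[m]\times[n]}$ be a matrix that does not have an elimination ordering. Let $E\subseteq[n]$ be the set produced by the following procedure: start with $E=\emptyset$; while $\mathrm{elm}(A,E)$ can be eliminated at some column, choose such a column $j\in[n]\setminus E$ and set $E\leftarrow E\cup\{j\}$. Let $\Delta=[n]\setminus E$ and let $A^r$ be the submatrix of $A$ consisting of the columns indexed by $\Delta$ (so $A^r\in\mathbb{R}^{[m]\times\Delta}$, and feasible solutions of $(A^r,b^r)$ lie in $D^{\Delta}$). If there exists $b^r\in\mathbb{R}^{[m]}$ such that the solution graph $G(R(A^r,b^r))$ is not connected, then there exists $b\in\mathbb{R}^{[m]}$ such that the solution graph $G(R(A,b))$ is not connected.
   Context: Fix a positive integer $d$ and let $D=\{0,1,\dots,d\}$; $[n]=\{1,\dots,n\}$. For a real matrix $A$ with row set $[m]$ and column index set $J$, and $b\in\mathbb{R}^{[m]}$, $R(A,b)=\{x\in D^{J} : Ax\ge b\}$. For $R\subseteq D^{J}$, the solution graph $G(R)$ is the undirected graph with vertex set $R$ in which $x,y$ are adjacent iff they differ in exactly one coordinate. A matrix $A=(a_{ij})$ with column index set $J$ can be eliminated at column $j\in J$ if (i) for every row $i$ with $a_{ij}>0$ we have $a_{ij'}=0$ for all $j'\in J\setminus\{j\}$, or (ii) for every row $i$ with $a_{ij}<0$ we have $a_{ij'}=0$ for all $j'\in J\setminus\{j\}$. For $J'\subseteq[n]$, $\mathrm{elm}(A,J')$ is the submatrix of $A$ obtained by deleting the columns indexed by $J'$.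 A sequence $(j_1,\dots,j_n)$ of the elements of $[n]$ is an elimination ordering (EO) of $A\in\mathbb{R}^{[m]\times[n]}$ if for every $t\in[n]$ the matrix $\mathrm{elm}(A,\{j_1,\dots,j_{t-1}\})$ can be eliminated at column $j_t$. *)

theory Defs
  imports Complex_Main
begin

(* Matrices A :: nat => nat => real, rows indexed by {1..m}, columns by a set J \<subseteq> {1..n}.
   A vector x \<in> D^J is a function nat => nat with x j \<le> d on J and x j = 0 off J
   (canonical representative). *)

definition sol_set :: "nat \<Rightarrow> nat \<Rightarrow> nat set \<Rightarrow> (nat \<Rightarrow> nat \<Rightarrow> real) \<Rightarrow> (nat \<Rightarrow> real) \<Rightarrow> (nat \<Rightarrow> nat) set" where
  "sol_set d m J A b = {x. (\<forall>j\<in>J. x j \<le> d) \<and> (\<forall>j. j \<notin> J \<longrightarrow> x j = 0) \<and>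
      (\<forall>i\<in>{1..m}. (\<Sum>j\<in>J. A i j * real (x j)) \<ge> b i)}"

definition adjacent :: "nat set \<Rightarrow> (nat \<Rightarrow> nat) \<Rightarrow> (nat \<Rightarrow> nat) \<Rightarrow> bool" where
  "adjacent J x y \<longleftrightarrow> card {j\<in>J. x j \<noteq> y j} = 1"

definition sol_graph_connected :: "nat set \<Rightarrow> (nat \<Rightarrow> nat) set \<Rightarrow> bool" where
  "sol_graph_connected J R \<longleftrightarrow>
     (\<forall>x\<in>R. \<forall>y\<in>R. (x, y) \<in> {(u, v). u \<in> R \<and> v \<in> R \<and> adjacent J u v}\<^sup>*)"

definition can_elim :: "nat \<Rightarrow> (nat \<Rightarrow> nat \<Rightarrow> real) \<Rightarrow> nat set \<Rightarrow> nat \<Rightarrow> bool" where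
  "can_elim m A J j \<longleftrightarrow>
     (\<forall>i\<in>{1..m}. A i j > 0 \<longrightarrow> (\<forall>j'\<in>J - {j}. A i j' = 0)) \<or>
     (\<forall>i\<in>{1..m}. A i j < 0 \<longrightarrow> (\<forall>j'\<in>J - {j}. A i j' = 0))"

(* elm(A, J') has column set {1..n} - J' *)
definition is_EO :: "nat \<Rightarrow> nat \<Rightarrow> (nat \<Rightarrow> nat \<Rightarrow> real) \<Rightarrow> nat list \<Rightarrow> bool" where
  "is_EO m n A js \<longleftrightarrow> distinct js \<and> set js = {1..n} \<and>
     (\<forall>t<n. can_elim m A ({1..n} - set (take t js)) (js ! t))"

definition has_EO :: "nat \<Rightarrow> nat \<Rightarrow> (nat \<Rightarrow> nat \<Rightarrow> real) \<Rightarrow> bool" where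
  "has_EO m n A \<longleftrightarrow> (\<exists>js. is_EO m n A js)"

definition greedy_run :: "nat \<Rightarrow> nat \<Rightarrow> (nat \<Rightarrow> nat \<Rightarrow> real) \<Rightarrow> nat list \<Rightarrow> bool" where
  "greedy_run m n A es \<longleftrightarrow> distinct es \<and> set es \<subseteq> {1..n} \<and>
     (\<forall>t<length es. can_elim m A ({1..n} - set (take t es)) (es ! t)) \<and>
     (\<forall>j\<in>{1..n} - set es. \<not> can_elim m A ({1..n} - set es) j)"

end

theory Submission
  imports Defs
begin

theorem lemma2:
  fixes d m n :: nat and A :: "nat \<Rightarrow> nat \<Rightarrow> real" and es :: "nat list"
    and br :: "nat \<Rightarrow> real"
  assumes "d > 0"
    and "\<not> has_EO m n A"
    and "greedy_run m n A es"
    and "\<not> sol_graph_connected ({1..n} - set es) (sol_set d m ({1..n} - set es) A br)"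
  shows "\<exists>b :: nat \<Rightarrow> real. \<not> sol_graph_connected {1..n} (sol_set d m {1..n} A b)"
proof -
  define N where "N = {1..n::nat}"
  define E where "E = set es"
  define Dl where "Dl = N - E"
  have EN: "E \<subseteq> N" using assms(3) unfolding greedy_run_def E_def N_def by auto
  have finN: "finite N" "finite E" "finite Dl" using EN unfolding N_def Dl_def E_def by auto
  have Nsplit: "N = Dl \<union> E" "Dl \<inter> E = {}" using EN unfolding Dl_def by auto
  define T where "T i = (\<exists>j\<in>Dl. A i j \<noteq> 0)" for i
  have sign: "(\<forall>i\<in>{1..m}. T i \<longrightarrow> A i e \<le> 0) \<or> (\<forall>i\<in>{1..m}. T i \<longrightarrow> A i e \<ge> 0)"
    if e: "e \<in> E" for e
  proof -
    obtain t where t: "t < length es" "es ! t = e" using e unfolding E_def by (meson in_set_conv_nth)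
    define J where "J = {1..n} - set (take t es)"
    have ce: "can_elim m A J e" using assms(3) t unfolding greedy_run_def J_def by auto
    have sub: "Dl - {e} \<subseteq> J - {e}" unfolding J_def Dl_def N_def E_def
      using set_take_subset by fastforce
    have eD: "e \<notin> Dl" using e unfolding Dl_def by auto
    show ?thesis
    proof (cases "\<forall>i\<in>{1..m}. A i e > 0 \<longrightarrow> (\<forall>j'\<in>J - {e}. A i j' = 0)")
      case True
      have "\<forall>i\<in>{1..m}. T i \<longrightarrow> A i e \<le> 0"
      proof (intro ballI impI)
        fix i assume i: "i \<in> {1..m}" "T i"
        then obtain j where j: "j \<in> Dl" "A i j \<noteq> 0" unfolding T_def by auto
        have "j \<in> J - {e}" using j eD sub by auto
        then have "A i e > 0 \<longrightarrow> A i j = 0" using True i(1) by blast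
        then show "A i e \<le> 0" using j(2) by linarith
      qed
      then show ?thesis by blast
    next
      case False
      then have F: "\<forall>i\<in>{1..m}. A i e < 0 \<longrightarrow> (\<forall>j'\<in>J - {e}. A i j' = 0)"
        using ce unfolding can_elim_def by blast
      have "\<forall>i\<in>{1..m}. T i \<longrightarrow> A i e \<ge> 0"
      proof (intro ballI impI)
        fix i assume i: "i \<in> {1..m}" "T i"
        then obtain j where j: "j \<in> Dl" "A i j \<noteq> 0" unfolding T_def by auto
        have "j \<in> J - {e}" using j eD sub by auto
        then have "A i e < 0 \<longrightarrow> A i j = 0" using F i(1) by blast
        then show "A i e \<ge> 0" using j(2) by linarith
      qed
      then show ?thesis by blast
    qed
  qed
  define v where "v e = (if (\<forall>i\<in>{1..m}. T i \<longrightarrow> A i e \<le> 0) then 0 else d)" for e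
  have vle: "v e \<le> d" for e unfolding v_def by auto
  have termle: "A i e * y \<le> A i e * real (v e)"
    if "i \<in> {1..m}" "T i" "e \<in> E" "0 \<le> y" "y \<le> real d" for i e y
  proof (cases "\<forall>i\<in>{1..m}. T i \<longrightarrow> A i e \<le> 0")
    case True
    have ve: "v e = 0" unfolding v_def using True by (rule if_P)
    have "A i e \<le> 0" using True that(1,2) by blast
    note this ve
    then show ?thesis using that by (simp add: mult_nonpos_nonneg)
  next
    case False
    have ve: "v e = d" unfolding v_def using False by (simp only: if_False)
    have "\<forall>i\<in>{1..m}. T i \<longrightarrow> A i e \<ge> 0" using False sign[OF that(3)] by blast
    then have "A i e \<ge> 0" using that(1,2) by blast
    note this ve
    then show ?thesis using that by (simp add: mult_left_mono)
  qed
  from assms(4) obtain p q where pq: "p \<in> sol_set d m Dl A br" "q \<in> sol_set d m Dl A br"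
    "(p, q) \<notin> {(u, w). u \<in> sol_set d m Dl A br \<and> w \<in> sol_set d m Dl A br \<and> adjacent Dl u w}\<^sup>*"
    unfolding sol_graph_connected_def Dl_def N_def E_def by blast
  have brneg: "br i \<le> 0" if "i \<in> {1..m}" "\<not> T i" for i
  proof -
    have "(\<Sum>j\<in>Dl. A i j * real (p j)) = 0" using that unfolding T_def by auto
    moreover have "br i \<le> (\<Sum>j\<in>Dl. A i j * real (p j))" using pq(1) that(1) unfolding sol_set_def by blast
    ultimately show ?thesis by simp
  qed
  define b where "b i = (if T i then br i + (\<Sum>e\<in>E. A i e * real (v e))
     else (\<Sum>e\<in>E. A i e * real (v e)))" for i
  define emb where "emb p = (\<lambda>j. if j \<in> E then v j else p j)" for p :: "nat \<Rightarrow> nat"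
  define proj where "proj x = (\<lambda>j. if j \<in> Dl then x j else (0::nat))" for x :: "nat \<Rightarrow> nat"
  have sumsplit: "(\<Sum>j\<in>N. f j) = (\<Sum>j\<in>Dl. f j) + (\<Sum>j\<in>E. f j)" for f :: "nat \<Rightarrow> real"
    using Nsplit finN by (simp add: sum.union_disjoint)
  have F1: "emb u \<in> sol_set d m N A b" if u: "u \<in> sol_set d m Dl A br" for u
  proof -
    have eq: "(\<Sum>j\<in>N. A i j * real (emb u j)) = (\<Sum>j\<in>Dl. A i j * real (u j)) + (\<Sum>e\<in>E. A i e * real (v e))" for i
    proof -
      have "(\<Sum>j\<in>Dl. A i j * real (emb u j)) = (\<Sum>j\<in>Dl. A i j * real (u j))"
        using Nsplit by (intro sum.cong) (auto simp: emb_def)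
      moreover have "(\<Sum>j\<in>E. A i j * real (emb u j)) = (\<Sum>e\<in>E. A i e * real (v e))"
        by (intro sum.cong) (auto simp: emb_def)
      ultimately show ?thesis using sumsplit by simp
    qed
    show ?thesis unfolding sol_set_def
    proof (intro CollectI conjI ballI allI impI)
      fix j assume "j \<in> N" then show "emb u j \<le> d" using u vle unfolding emb_def sol_set_def Dl_def by auto
    next
      fix j assume "j \<notin> N" then show "emb u j = 0" using u EN unfolding emb_def sol_set_def Dl_def by auto
    next
      fix i assume i: "i \<in> {1..m}"
      show "b i \<le> (\<Sum>j\<in>N. A i j * real (emb u j))"
      proof (cases "T i")
        case True then show ?thesis using u i eq[of i] unfolding sol_set_def b_def by auto
      next
        case False
        have "(\<Sum>j\<in>Dl. A i j * real (u j)) = 0" using False unfolding T_def by auto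
        then show ?thesis using False eq[of i] unfolding b_def by auto
      qed
    qed
  qed
  have F2: "proj x \<in> sol_set d m Dl A br" if x: "x \<in> sol_set d m N A b" for x
  proof -
    have eqD: "(\<Sum>j\<in>Dl. A i j * real (proj x j)) = (\<Sum>j\<in>Dl. A i j * real (x j))" for i
      by (intro sum.cong) (auto simp: proj_def)
    show ?thesis unfolding sol_set_def
    proof (intro CollectI conjI ballI allI impI)
      fix j assume "j \<in> Dl" then show "proj x j \<le> d" using x unfolding proj_def sol_set_def Dl_def by auto
    next
      fix j assume "j \<notin> Dl" then show "proj x j = 0" unfolding proj_def by auto
    next
      fix i assume i: "i \<in> {1..m}"
      show "br i \<le> (\<Sum>j\<in>Dl. A i j * real (proj x j))"
      proof (cases "T i")
        case True
        have "(\<Sum>e\<in>E. A i e * real (x e)) \<le> (\<Sum>e\<in>E. A i e * real (v e))"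
        proof (rule sum_mono)
          fix e assume e: "e \<in> E"
          have "x e \<le> d" using x e EN unfolding sol_set_def by auto
          then show "A i e * real (x e) \<le> A i e * real (v e)" using termle[OF i True e] by simp
        qed
        moreover have "b i \<le> (\<Sum>j\<in>N. A i j * real (x j))" using x i unfolding sol_set_def by auto
        ultimately show ?thesis using True eqD[of i] sumsplit[of "\<lambda>j. A i j * real (x j)"]
          unfolding b_def by auto
      next
        case False
        have "(\<Sum>j\<in>Dl. A i j * real (proj x j)) = 0" using False unfolding T_def by auto
        then show ?thesis using brneg[OF i False] by simp
      qed
    qed
  qed
  have F4: "proj (emb u) = u" if u: "u \<in> sol_set d m Dl A br" for u
  proof
    fix j show "proj (emb u) j = u j" using u Nsplit unfolding proj_def emb_def sol_set_def by auto
  qed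
  have F3: "proj x = proj y \<or> adjacent Dl (proj x) (proj y)" if adj: "adjacent N x y" for x y
  proof -
    obtain k where k: "{j\<in>N. x j \<noteq> y j} = {k}" using adj unfolding adjacent_def
      by (meson card_1_singletonE)
    have sub: "{j\<in>Dl. proj x j \<noteq> proj y j} \<subseteq> {k}" using k Nsplit unfolding proj_def by auto
    show ?thesis
    proof (cases "{j\<in>Dl. proj x j \<noteq> proj y j} = {}")
      case True
      then have "proj x = proj y" unfolding proj_def by (auto intro!: ext)
      then show ?thesis by simp
    next
      case False
      then have "{j\<in>Dl. proj x j \<noteq> proj y j} = {k}" using sub by blast
      then show ?thesis unfolding adjacent_def by simp
    qed
  qed
  define RN where "RN = {(u, w). u \<in> sol_set d m N A b \<and> w \<in> sol_set d m N A b \<and> adjacent N u w}"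
  define RD where "RD = {(u, w). u \<in> sol_set d m Dl A br \<and> w \<in> sol_set d m Dl A br \<and> adjacent Dl u w}"
  have path: "(proj x, proj y) \<in> RD\<^sup>*" if "(x, y) \<in> RN\<^sup>*" for x y
    using that
  proof (induction rule: rtrancl_induct)
    case base then show ?case by simp
  next
    case (step y z)
    then have yz: "y \<in> sol_set d m N A b" "z \<in> sol_set d m N A b" "adjacent N y z" unfolding RN_def by auto
    have "proj y = proj z \<or> (proj y, proj z) \<in> RD"
      using F3[OF yz(3)] F2[OF yz(1)] F2[OF yz(2)] unfolding RD_def by auto
    then show ?case
    proof
      assume "proj y = proj z" then show ?case using step.IH by simp
    next
      assume "(proj y, proj z) \<in> RD" then show ?case using step.IH by (rule rtrancl_into_rtrancl[rotated])
    qed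
  qed
  show ?thesis
  proof (intro exI notI)
    assume "sol_graph_connected {1..n} (sol_set d m {1..n} A b)"
    then have "(emb p, emb q) \<in> RN\<^sup>*" using F1 pq unfolding sol_graph_connected_def RN_def N_def by blast
    then have "(p, q) \<in> RD\<^sup>*" using path F4 pq by metis
    then show False using pq(3) unfolding RD_def by simp
  qed
qed

end
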